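(* Let $G=(V,E)$ be a finite simple graph and $C\subseteq V$ such that no vertex of $V\setminus C$ is isolated in $G$, and let $m$ be a positive integer with $m\ge\gamma_{\rm gr}(G;C)$. Consider the integer program $F_1$ with binary variables $x_{vi},y_{vi}$ for $v\in V$, $i=1,\dots,m$ (and constants $x_{u0}=1$ for all $u\in V$): maximize $\sum_{i=1}^m\sum_{v\in V}y_{vi}$ subject to (a) $\sum_{v\in V}y_{vi}\le 1$ for all $i=1,\dots,m$; (b) $\sum_{i=1}^m y_{vi}\le 1$ for all $v\in V$; (c) $x_{ui}\le x_{u(i-1)}$ for all $u\in V$, $i=2,\dots,m$; (d) $x_{ui}+\sum_{v\in N\langle u\rangle}y_{vi}\le 1$ for all $u\in V$, $i=1,\dots,m$; (e) $y_{vi}\le\sum_{u\in N\langle v\rangle}(x_{u(i-1)}-x_{ui})$ for all $v\in V$, $i=2,\dots,m$; $x_{vi},y_{vi}\in\{0,1\}$. Then the optimal value of $F_1$ equals $\gamma_{\rm gr}(G;C)$.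
   Context: $N\langle v\rangle = N[v]$ (closed neighborhood) if $v\in C$ and $N\langle v\rangle=N(v)$ (open neighborhood) if $v\notin C$. A sequence $(v_1,\dots,v_k)$ of distinct vertices is legal if $N\langle v_i\rangle\setminus\bigcup_{j<i}N\langle v_j\rangle\neq\emptyset$ for all $i\ge 2$, and dominating if $\bigcup_j N\langle v_j\rangle=V$; $\gamma_{\rm gr}(G;C)$ is the maximum length of a legal dominating sequence of $G;C$. *)

theory Defs
  imports Main
begin

definition simple_graph :: "'a set \<Rightarrow> ('a \<Rightarrow> 'a \<Rightarrow> bool) \<Rightarrow> bool" where
  "simple_graph V E \<longleftrightarrow> finite V \<and> (\<forall>u v. E u v \<longrightarrow> u \<in> V \<and> v \<in> V)
     \<and> (\<forall>u v. E u v \<longrightarrow> E v u) \<and> (\<forall>v. \<not> E v v)"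

definition open_nbhd :: "'a set \<Rightarrow> ('a \<Rightarrow> 'a \<Rightarrow> bool) \<Rightarrow> 'a \<Rightarrow> 'a set" where
  "open_nbhd V E v = {u \<in> V. E v u}"

definition closed_nbhd :: "'a set \<Rightarrow> ('a \<Rightarrow> 'a \<Rightarrow> bool) \<Rightarrow> 'a \<Rightarrow> 'a set" where
  "closed_nbhd V E v = insert v (open_nbhd V E v)"

definition nbhdC :: "'a set \<Rightarrow> ('a \<Rightarrow> 'a \<Rightarrow> bool) \<Rightarrow> 'a set \<Rightarrow> 'a \<Rightarrow> 'a set" where
  "nbhdC V E C v = (if v \<in> C then closed_nbhd V E v else open_nbhd V E v)"

text \<open>Sequences are lists; position k (0-based) is the (k+1)-st vertex.\<close>
definition legal_seq :: "'a set \<Rightarrow> ('a \<Rightarrow> 'a \<Rightarrow> bool) \<Rightarrow> 'a set \<Rightarrow> 'a list \<Rightarrow> bool" where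
  "legal_seq V E C s \<longleftrightarrow> set s \<subseteq> V \<and> distinct s \<and>
     (\<forall>k. 1 \<le> k \<and> k < length s \<longrightarrow>
        nbhdC V E C (s ! k) - (\<Union>j<k. nbhdC V E C (s ! j)) \<noteq> {})"

definition dominating_seq :: "'a set \<Rightarrow> ('a \<Rightarrow> 'a \<Rightarrow> bool) \<Rightarrow> 'a set \<Rightarrow> 'a list \<Rightarrow> bool" where
  "dominating_seq V E C s \<longleftrightarrow> (\<Union>v\<in>set s. nbhdC V E C v) = V"

definition grundy_dom :: "'a set \<Rightarrow> ('a \<Rightarrow> 'a \<Rightarrow> bool) \<Rightarrow> 'a set \<Rightarrow> nat" where
  "grundy_dom V E C = Max {length s | s. legal_seq V E C s \<and> dominating_seq V E C s}"

text \<open>Feasibility for the integer program F1 (variables x v i, y v i for v in V, 1 <= i <= m;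
  the constants x u 0 = 1 are never used by constraints (c) and (e), which start at i = 2).\<close>
definition F1_feasible :: "'a set \<Rightarrow> ('a \<Rightarrow> 'a \<Rightarrow> bool) \<Rightarrow> 'a set \<Rightarrow> nat \<Rightarrow>
    ('a \<Rightarrow> nat \<Rightarrow> int) \<Rightarrow> ('a \<Rightarrow> nat \<Rightarrow> int) \<Rightarrow> bool" where
  "F1_feasible V E C m x y \<longleftrightarrow>
     (\<forall>i\<in>{1..m}. (\<Sum>v\<in>V. y v i) \<le> 1) \<and>
     (\<forall>v\<in>V. (\<Sum>i=1..m. y v i) \<le> 1) \<and>
     (\<forall>u\<in>V. \<forall>i\<in>{2..m}. x u i \<le> x u (i - 1)) \<and>
     (\<forall>u\<in>V. \<forall>i\<in>{1..m}. x u i + (\<Sum>v\<in>nbhdC V E C u. y v i) \<le> 1) \<and>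
     (\<forall>v\<in>V. \<forall>i\<in>{2..m}. y v i \<le> (\<Sum>u\<in>nbhdC V E C v. x u (i - 1) - x u i)) \<and>
     (\<forall>v\<in>V. \<forall>i\<in>{1..m}. x v i \<in> {0, 1} \<and> y v i \<in> {0, 1})"

definition F1_objective :: "'a set \<Rightarrow> nat \<Rightarrow> ('a \<Rightarrow> nat \<Rightarrow> int) \<Rightarrow> int" where
  "F1_objective V m y = (\<Sum>i=1..m. \<Sum>v\<in>V. y v i)"

end

theory Submission
  imports Defs
begin

lemma sum01_le1:
  fixes f :: "'b \<Rightarrow> int"
  assumes "finite A" "\<forall>a\<in>A. f a \<in> {0,1}" "\<forall>a\<in>A. \<forall>b\<in>A. f a = 1 \<longrightarrow> f b = 1 \<longrightarrow> a = b"
  shows "sum f A \<le> 1"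
proof -
  have "sum f A = (\<Sum>a\<in>A. if f a = 1 then 1 else 0)"
    using assms(2) by (intro sum.cong) auto
  also have "\<dots> = sum (\<lambda>_. 1) {a\<in>A. f a = 1}"
    using assms(1) by (simp only: sum.inter_filter)
  also have "\<dots> = int (card {a\<in>A. f a = 1})" by simp
  also have "card {a\<in>A. f a = 1} \<le> Suc 0"
    using assms(1,3) by (subst card_le_Suc0_iff_eq) auto
  finally show ?thesis by simp
qed

lemma sum01_uniq:
  fixes f :: "'b \<Rightarrow> int"
  assumes "finite A" "\<forall>a\<in>A. f a \<ge> 0" "sum f A \<le> 1" "a \<in> A" "b \<in> A" "f a = 1" "f b = 1"
  shows "a = b"
proof (rule ccontr)
  assume "a \<noteq> b"
  then have "sum f {a,b} = 2" using assms by simp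
  moreover have "sum f {a,b} \<le> sum f A"
    using assms by (intro sum_mono2) auto
  ultimately show False using assms by simp
qed

lemma sum_nonneg_ge:
  fixes f :: "'b \<Rightarrow> int"
  assumes "finite A" "\<forall>a\<in>A. f a \<ge> 0" "a \<in> A"
  shows "f a \<le> sum f A"
  using assms by (intro member_le_sum) auto

lemma nbhd_sub:
  assumes "v \<in> V" shows "nbhdC V E C v \<subseteq> V"
  using assms by (auto simp: nbhdC_def closed_nbhd_def open_nbhd_def)

lemma nbhd_sym:
  assumes "simple_graph V E" "u \<in> V" "v \<in> V"
  shows "v \<in> nbhdC V E C u \<longleftrightarrow> u \<in> nbhdC V E C v"
  using assms by (auto simp: nbhdC_def closed_nbhd_def open_nbhd_def simple_graph_def)

lemma legal_extend:
  assumes G: "simple_graph V E" and nis: "\<forall>v\<in>V - C. \<exists>u. E v u"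
  shows "legal_seq V E C s \<Longrightarrow> \<exists>t. legal_seq V E C t \<and> dominating_seq V E C t \<and> length s \<le> length t"
proof (induction "card V - length s" arbitrary: s rule: less_induct)
  case less
  show ?case
  proof (cases "dominating_seq V E C s")
    case True then show ?thesis using less.prems by blast
  next
    case False
    have sV: "set s \<subseteq> V" and ds: "distinct s" using less.prems unfolding legal_seq_def by simp_all
    have sub: "(\<Union>v\<in>set s. nbhdC V E C v) \<subseteq> V" using sV nbhd_sub by (metis UN_least subsetD)
    have ne: "(\<Union>v\<in>set s. nbhdC V E C v) \<noteq> V" using False unfolding dominating_seq_def by simp
    obtain w where wV: "w \<in> V" and wn: "w \<notin> (\<Union>v\<in>set s. nbhdC V E C v)"
      using sub ne by blast
    obtain v where vV: "v \<in> V" and wv: "w \<in> nbhdC V E C v"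
    proof (cases "w \<in> C")
      case True then show ?thesis using that[of w] wV by (auto simp: nbhdC_def closed_nbhd_def)
    next
      case False
      then obtain u where "E w u" using nis wV by blast
      then have "u \<in> V" "w \<in> nbhdC V E C u" using G wV
        by (auto simp: simple_graph_def nbhdC_def closed_nbhd_def open_nbhd_def)
      then show ?thesis using that by blast
    qed
    have vs: "v \<notin> set s" using wn wv by blast
    have fin: "finite V" using G by (simp add: simple_graph_def)
    have "length s = card (set s)" using ds by (simp add: distinct_card)
    also have "\<dots> < card V" proof (rule psubset_card_mono[OF fin])
      show "set s \<subset> V" using sV vs vV by blast
    qed
    finally have lt: "length s < card V" .
    have leg: "legal_seq V E C (s @ [v])"
      unfolding legal_seq_def
    proof (intro conjI allI impI)
      show "set (s @ [v]) \<subseteq> V" using sV vV by auto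
      show "distinct (s @ [v])" using ds vs by auto
      fix k assume k: "1 \<le> k \<and> k < length (s @ [v])"
      show "nbhdC V E C ((s @ [v]) ! k) - (\<Union>j<k. nbhdC V E C ((s @ [v]) ! j)) \<noteq> {}"
      proof (cases "k < length s")
        case True
        then have "nbhdC V E C (s ! k) - (\<Union>j<k. nbhdC V E C (s ! j)) \<noteq> {}"
          using less.prems k unfolding legal_seq_def by auto
        moreover have "(\<Union>j<k. nbhdC V E C ((s @ [v]) ! j)) = (\<Union>j<k. nbhdC V E C (s ! j))"
          using True by (auto simp: nth_append)
        ultimately show ?thesis using True by (simp add: nth_append)
      next
        case False
        then have kk: "k = length s" using k by simp
        have "w \<notin> (\<Union>j<k. nbhdC V E C ((s @ [v]) ! j))"
        proof
          assume "w \<in> (\<Union>j<k. nbhdC V E C ((s @ [v]) ! j))"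
          then obtain j where "j < length s" "w \<in> nbhdC V E C ((s @ [v]) ! j)" using kk by auto
          then have "s ! j \<in> set s" "w \<in> nbhdC V E C (s ! j)" by (simp_all add: nth_append)
          then show False using wn by blast
        qed
        then show ?thesis using kk wv by auto
      qed
    qed
    have "card V - length (s @ [v]) < card V - length s" using lt by simp
    from less.hyps[OF this leg] show ?thesis by auto
  qed
qed

lemma take_nth_ex:
  assumes "w \<in> set (take k s)" shows "\<exists>j<k. j < length s \<and> w = s ! j"
  using assms by (auto simp: in_set_conv_nth)

lemma take_mem:
  assumes "1 \<le> i" "i \<le> length s" shows "s ! (i - 1) \<in> set (take i s)"
proof -
  have "take i s ! (i - 1) = s ! (i - 1)" using assms by simp
  moreover have "i - 1 < length (take i s)" using assms by simp
  ultimately show ?thesis by (metis nth_mem)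
qed

lemma lower:
  assumes G: "simple_graph V E" and leg: "legal_seq V E C s" and ml: "length s \<le> m"
  shows "\<exists>x y. F1_feasible V E C m x y \<and> F1_objective V m y = int (length s)"
proof -
  define n where "n = length s"
  define D where "D i = (\<Union>v\<in>set (take i s). nbhdC V E C v)" for i
  define x :: "'a \<Rightarrow> nat \<Rightarrow> int" where "x u i = (if u \<in> D i then 0 else 1)" for u i
  define y :: "'a \<Rightarrow> nat \<Rightarrow> int" where "y v i = (if 1 \<le> i \<and> i \<le> n \<and> s ! (i - 1) = v then 1 else 0)" for v i
  have fin: "finite V" using G by (simp add: simple_graph_def)
  have sV: "set s \<subseteq> V" and ds: "distinct s" using leg by (auto simp: legal_seq_def)
  have finN: "finite (nbhdC V E C u)" if "u \<in> V" for u
    using nbhd_sub[OF that] fin finite_subset by blast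
  have Dmono: "D a \<subseteq> D b" if "a \<le> b" for a b
    unfolding D_def using set_take_subset_set_take[OF that, of s] by blast
  have xmono: "x u b \<le> x u a" if "a \<le> b" for u a b
    using Dmono[OF that] by (auto simp: x_def)
  have sinV: "s ! (i - 1) \<in> V" if "1 \<le> i" "i \<le> n" for i
    using that sV n_def by (simp add: subset_iff)
  have row: "(\<Sum>v\<in>V. y v i) = (if 1 \<le> i \<and> i \<le> n then 1 else 0)" for i
  proof (cases "1 \<le> i \<and> i \<le> n")
    case True
    then have "(\<Sum>v\<in>V. y v i) = (\<Sum>v\<in>V. if s ! (i - 1) = v then 1 else 0)"
      by (simp add: y_def)
    also have "\<dots> = 1" using sinV True fin by (simp add: sum.delta)
    finally show ?thesis using True by simp
  next
    case False
    then have "\<And>v. y v i = 0" by (auto simp: y_def)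
    then show ?thesis using False by simp
  qed
  have y01: "y v i \<in> {0,1}" for v i by (simp add: y_def)
  have x01: "x v i \<in> {0,1}" for v i by (simp add: x_def)
  have yuniq: "a = b" if "y a i = 1" "y b i = 1" for a b i
    using that by (auto simp: y_def split: if_splits)
  have yuniq2: "i = j" if "y v i = 1" "y v j = 1" for v i j
  proof -
    have "1 \<le> i" "i \<le> n" "s ! (i - 1) = v" "1 \<le> j" "j \<le> n" "s ! (j - 1) = v"
      using that by (auto simp: y_def split: if_splits)
    then have "i - 1 = j - 1" using ds n_def nth_eq_iff_index_eq[OF ds, of "i - 1" "j - 1"] by auto
    then show ?thesis using \<open>1 \<le> i\<close> \<open>1 \<le> j\<close> by simp
  qed
  have feas: "F1_feasible V E C m x y"
    unfolding F1_feasible_def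
  proof (intro conjI ballI)
    fix i assume "i \<in> {1..m}"
    show "(\<Sum>v\<in>V. y v i) \<le> 1" by (simp add: row)
  next
    fix v assume "v \<in> V"
    show "(\<Sum>i = 1..m. y v i) \<le> 1"
      by (rule sum01_le1) (use y01 yuniq2 in auto)
  next
    fix u i assume "u \<in> V" "i \<in> {2..m}"
    show "x u i \<le> x u (i - 1)" by (rule xmono) simp
  next
    fix u i assume uV: "u \<in> V" and i: "i \<in> {1..m}"
    show "x u i + (\<Sum>v\<in>nbhdC V E C u. y v i) \<le> 1"
    proof (cases "u \<in> D i")
      case True
      have "(\<Sum>v\<in>nbhdC V E C u. y v i) \<le> 1"
        by (rule sum01_le1) (use y01 yuniq finN[OF uV] in auto)
      then show ?thesis using True by (simp add: x_def)
    next
      case False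
      have "y v i = 0" if vN: "v \<in> nbhdC V E C u" for v
      proof (rule ccontr)
        assume "y v i \<noteq> 0"
        then have h: "1 \<le> i" "i \<le> n" "s ! (i - 1) = v" by (auto simp: y_def split: if_splits)
        then have "v \<in> set (take i s)" using n_def
          using take_mem[of i s] by auto 
        moreover have "v \<in> V" using nbhd_sub[OF uV] vN by blast
        moreover have "u \<in> nbhdC V E C v" using nbhd_sym[OF G uV \<open>v \<in> V\<close>] vN by blast
        ultimately have "u \<in> D i" unfolding D_def by blast
        then show False using False by blast
      qed
      then show ?thesis using False by (simp add: x_def)
    qed
  next
    fix v i assume vV: "v \<in> V" and i: "i \<in> {2..m}"
    have nonneg: "\<forall>u\<in>nbhdC V E C v. 0 \<le> x u (i - 1) - x u i" using xmono[of "i - 1" i] by simp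
    show "y v i \<le> (\<Sum>u\<in>nbhdC V E C v. x u (i - 1) - x u i)"
    proof (cases "y v i = 1")
      case False
      then have "y v i = 0" using y01[of v i] by auto
      then show ?thesis using nonneg by (simp add: sum_nonneg)
    next
      case True
      then have h: "i \<le> n" "s ! (i - 1) = v" by (auto simp: y_def split: if_splits)
      have k: "1 \<le> i - 1" "i - 1 < length s" using i h n_def by auto
      then have "nbhdC V E C (s ! (i - 1)) - (\<Union>j<i - 1. nbhdC V E C (s ! j)) \<noteq> {}"
        using leg unfolding legal_seq_def by simp
      then obtain u where uN: "u \<in> nbhdC V E C v" and un: "u \<notin> (\<Union>j<i - 1. nbhdC V E C (s ! j))"
        using h(2) by blast
      have "u \<notin> D (i - 1)"
      proof
        assume "u \<in> D (i - 1)"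
        then obtain w where w: "w \<in> set (take (i - 1) s)" "u \<in> nbhdC V E C w" unfolding D_def by blast
        from take_nth_ex[OF w(1)] obtain j where "j < i - 1" "w = s ! j" by blast
        then show False using un w(2) by blast
      qed
      moreover have "v \<in> set (take i s)" using k h
        using take_mem[of i s] by auto
      then have "u \<in> D i" using uN unfolding D_def by blast
      ultimately have "x u (i - 1) - x u i = 1" by (simp add: x_def)
      then have "1 \<le> (\<Sum>u\<in>nbhdC V E C v. x u (i - 1) - x u i)"
        using sum_nonneg_ge[OF finN[OF vV] nonneg uN] by simp
      then show ?thesis using True by simp
    qed
  next
    fix v i assume "v \<in> V" "i \<in> {1..m}"
    show "x v i \<in> {0, 1}" "y v i \<in> {0, 1}" using x01 y01 by auto
  qed
  have "F1_objective V m y = (\<Sum>i=1..m. if 1 \<le> i \<and> i \<le> n then 1 else 0)"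
    unfolding F1_objective_def by (simp add: row)
  also have "\<dots> = (\<Sum>i\<in>{i\<in>{1..m}. i \<le> n}. 1)"
  proof -
    have "(\<Sum>i\<in>{i\<in>{1..m}. i \<le> n}. (1::int)) = (\<Sum>i=1..m. if i \<le> n then 1 else 0)"
      by (rule sum.inter_filter) simp
    moreover have "(\<Sum>i=1..m. if 1 \<le> i \<and> i \<le> n then 1 else (0::int)) = (\<Sum>i=1..m. if i \<le> n then 1 else 0)"
      by (intro sum.cong) auto
    ultimately show ?thesis by simp
  qed
  also have "{i\<in>{1..m}. i \<le> n} = {1..n}" using ml n_def by auto
  finally have "F1_objective V m y = int n" by simp
  then show ?thesis using feas n_def by blast
qed

lemma xmono_feas:
  assumes c: "\<forall>i\<in>{2..m}. (x::nat \<Rightarrow> int) i \<le> x (i - 1)" and "1 \<le> a" "a \<le> b" "b \<le> m"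
  shows "x b \<le> x a"
  using assms(3,4)
proof (induction b rule: dec_induct)
  case base then show ?case by simp
next
  case (step n)
  have "Suc n \<in> {2..m}" using step.prems assms(2) step.hyps(1) by simp
  then have "x (Suc n) \<le> x (Suc n - 1)" using c by blast
  with step show ?case by simp
qed

lemma upper:
  assumes G: "simple_graph V E" and F: "F1_feasible V E C m x y"
  shows "\<exists>s. legal_seq V E C s \<and> int (length s) = F1_objective V m y"
proof -
  have fin: "finite V" using G by (simp add: simple_graph_def)
  have finN: "finite (nbhdC V E C u)" if "u \<in> V" for u
    using nbhd_sub[OF that] fin finite_subset by blast
  have a: "\<forall>i\<in>{1..m}. (\<Sum>v\<in>V. y v i) \<le> 1"
   and b: "\<forall>v\<in>V. (\<Sum>i=1..m. y v i) \<le> 1"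
   and c: "\<forall>u\<in>V. \<forall>i\<in>{2..m}. x u i \<le> x u (i - 1)"
   and d: "\<forall>u\<in>V. \<forall>i\<in>{1..m}. x u i + (\<Sum>v\<in>nbhdC V E C u. y v i) \<le> 1"
   and e: "\<forall>v\<in>V. \<forall>i\<in>{2..m}. y v i \<le> (\<Sum>u\<in>nbhdC V E C v. x u (i - 1) - x u i)"
   and f: "\<forall>v\<in>V. \<forall>i\<in>{1..m}. x v i \<in> {0, 1} \<and> y v i \<in> {0, 1}"
    using F unfolding F1_feasible_def by blast+
  have ynn: "0 \<le> y v i" if "v \<in> V" "i \<in> {1..m}" for v i
    using f that by force
  have y01: "y v i = 0 \<or> y v i = 1" if "v \<in> V" "i \<in> {1..m}" for v i
    using f that by blast
  have x01: "x v i = 0 \<or> x v i = 1" if "v \<in> V" "i \<in> {1..m}" for v i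
    using f that by blast
  define I where "I = {i\<in>{1..m}. \<exists>v\<in>V. y v i = 1}"
  define g where "g i = (THE v. v \<in> V \<and> y v i = 1)" for i
  have yuniq: "v = w" if "i \<in> {1..m}" "v \<in> V" "w \<in> V" "y v i = 1" "y w i = 1" for i v w
    by (rule sum01_uniq[OF fin _ a[rule_format, OF that(1)]]) (use ynn that in auto)
  have gI: "g i \<in> V \<and> y (g i) i = 1" if iI0: "i \<in> I" for i
  proof -
    obtain v where v: "v \<in> V" "y v i = 1" using iI0 I_def by blast
    have i: "i \<in> {1..m}" using iI0 I_def by blast
    have "g i = v" unfolding g_def
      by (rule the_equality) (use v yuniq[OF i] in auto)
    then show ?thesis using v by simp
  qed
  have finI: "finite I" unfolding I_def by simp
  define L where "L = sorted_list_of_set I"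
  define s where "s = map g L"
  have setL: "set L = I" and dL: "distinct L" and lenL: "length L = card I"
    using finI by (simp_all add: L_def)
  have sortL: "sorted_wrt (<) L" by (simp add: L_def)
  have injg: "inj_on g I"
  proof (rule inj_onI)
    fix i j assume ij: "i \<in> I" "j \<in> I" "g i = g j"
    have "i \<in> {1..m}" "j \<in> {1..m}" using ij I_def by auto
    moreover have "g i \<in> V" "y (g i) i = 1" "y (g i) j = 1" using gI[OF ij(1)] gI[OF ij(2)] ij(3) by auto
    ultimately show "i = j"
      using sum01_uniq[OF _ _ b[rule_format, of "g i"], of i j] ynn by auto
  qed
  have obj: "F1_objective V m y = int (card I)"
  proof -
    have "(\<Sum>v\<in>V. y v i) = (if i \<in> I then 1 else 0)" if i: "i \<in> {1..m}" for i
    proof (cases "i \<in> I")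
      case True
      have "y (g i) i \<le> (\<Sum>v\<in>V. y v i)"
        by (rule sum_nonneg_ge[OF fin]) (use ynn i gI[OF True] in auto)
      moreover have "(\<Sum>v\<in>V. y v i) \<le> 1" using a i by blast
      ultimately show ?thesis using True gI[OF True] by auto
    next
      case False
      have "\<forall>v\<in>V. y v i = 0"
      proof
        fix v assume vV: "v \<in> V"
        then have "y v i \<noteq> 1" using False i I_def by auto
        then show "y v i = 0" using y01[OF vV i] by blast
      qed
      then show ?thesis using False by simp
    qed
    then have "F1_objective V m y = (\<Sum>i=1..m. if i \<in> I then 1 else 0)"
      unfolding F1_objective_def by (intro sum.cong) auto
    also have "\<dots> = (\<Sum>i\<in>{i\<in>{1..m}. i \<in> I}. 1)"
      by (rule sum.inter_filter[symmetric]) simp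
    also have "{i\<in>{1..m}. i \<in> I} = I" unfolding I_def by auto
    finally show ?thesis by simp
  qed
  have leg: "legal_seq V E C s"
    unfolding legal_seq_def
  proof (intro conjI allI impI)
    show "set s \<subseteq> V" using gI setL by (auto simp: s_def)
    show "distinct s" unfolding s_def using dL injg setL by (simp add: distinct_map)
    fix k assume k: "1 \<le> k \<and> k < length s"
    then have kL: "k < length L" by (simp add: s_def)
    define i where "i = L ! k"
    have iI: "i \<in> I" using kL setL i_def nth_mem by blast
    have L0: "L ! 0 < i" using sortL kL k i_def by (simp add: sorted_wrt_iff_nth_less)
    have "L ! 0 \<in> I" using kL setL nth_mem by (metis gr_zeroI less_nat_zero_code order_less_trans)
    then have "1 \<le> L ! 0" unfolding I_def by auto
    then have i2: "i \<in> {2..m}" using L0 iI I_def by auto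
    define v where "v = g i"
    have vV: "v \<in> V" and yv: "y v i = 1" using gI[OF iI] v_def by auto
    have "y v i \<le> (\<Sum>u\<in>nbhdC V E C v. x u (i - 1) - x u i)" using e vV i2 by blast
    then have s1: "1 \<le> (\<Sum>u\<in>nbhdC V E C v. x u (i - 1) - x u i)" using yv by simp
    have "\<exists>u\<in>nbhdC V E C v. x u (i - 1) - x u i > 0"
    proof (rule ccontr)
      assume "\<not> ?thesis"
      then have "\<forall>u\<in>nbhdC V E C v. x u (i - 1) - x u i \<le> 0" by (simp add: not_less)
      then have "(\<Sum>u\<in>nbhdC V E C v. x u (i - 1) - x u i) \<le> 0" by (intro sum_nonpos) blast
      then show False using s1 by simp
    qed
    then obtain u where uN: "u \<in> nbhdC V E C v" and pos: "x u (i - 1) - x u i > 0" by blast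
    have uV: "u \<in> V" using nbhd_sub[OF vV] uN by blast
    have "i - 1 \<in> {1..m}" "i \<in> {1..m}" using i2 by auto
    then have "x u (i - 1) = 0 \<or> x u (i - 1) = 1" "x u i = 0 \<or> x u i = 1" using x01 uV by blast+
    then have xu1: "x u (i - 1) = 1" using pos by auto
    have "u \<notin> nbhdC V E C (s ! j)" if j: "j < k" for j
    proof
      assume uj: "u \<in> nbhdC V E C (s ! j)"
      define i' where "i' = L ! j"
      have jL: "j < length L" using j kL by simp
      have i'I: "i' \<in> I" using jL setL i'_def nth_mem by blast
      have "i' < i" using sortL j kL i_def i'_def by (simp add: sorted_wrt_iff_nth_less)
      have i'1: "i' \<in> {1..m}" using i'I I_def by auto
      have "x u (i - 1) \<le> x u i'"
        by (rule xmono_feas[of m "x u"]) (use c uV i'1 \<open>i' < i\<close> i2 in auto)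
      then have xi': "x u i' = 1" using xu1 x01[OF uV i'1] by auto
      have w: "g i' \<in> V" "y (g i') i' = 1" using gI[OF i'I] by auto
      have sj: "s ! j = g i'" using jL i'_def by (simp add: s_def)
      have "g i' \<in> nbhdC V E C u" using nbhd_sym[OF G uV w(1)] uj sj by simp
      then have "y (g i') i' \<le> (\<Sum>v\<in>nbhdC V E C u. y v i')"
        by (rule sum_nonneg_ge[OF finN[OF uV], rotated]) (use ynn i'1 nbhd_sub[OF uV] in blast)
      moreover have "x u i' + (\<Sum>v\<in>nbhdC V E C u. y v i') \<le> 1" using d uV i'1 by blast
      ultimately show False using xi' w(2) by simp
    qed
    then have "u \<in> nbhdC V E C (s ! k) - (\<Union>j<k. nbhdC V E C (s ! j))"
      using uN kL i_def v_def by (auto simp: s_def)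
    then show "nbhdC V E C (s ! k) - (\<Union>j<k. nbhdC V E C (s ! j)) \<noteq> {}" by blast
  qed
  show ?thesis using leg obj lenL by (auto simp: s_def)
qed

theorem theorem1:
  fixes V :: "'a set" and E :: "'a \<Rightarrow> 'a \<Rightarrow> bool" and C :: "'a set" and m :: nat
  assumes "simple_graph V E"
    and "C \<subseteq> V"
    and "\<forall>v\<in>V - C. \<exists>u. E v u"
    and "m \<ge> 1"
    and "m \<ge> grundy_dom V E C"
  shows "(\<exists>x y. F1_feasible V E C m x y \<and> F1_objective V m y = int (grundy_dom V E C))
       \<and> (\<forall>x y. F1_feasible V E C m x y \<longrightarrow> F1_objective V m y \<le> int (grundy_dom V E C))"
proof -
  note G = assms(1)
  define S where "S = {length s | s. legal_seq V E C s \<and> dominating_seq V E C s}"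
  have fin: "finite V" using G by (simp add: simple_graph_def)
  have Ssub: "S \<subseteq> {0..card V}"
  proof
    fix n assume "n \<in> S"
    then obtain s where s: "n = length s" "legal_seq V E C s" unfolding S_def by blast
    then have "set s \<subseteq> V" "distinct s" by (simp_all add: legal_seq_def)
    then have "length s \<le> card V" using fin by (metis card_mono distinct_card)
    then show "n \<in> {0..card V}" using s by simp
  qed
  have finS: "finite S" using Ssub finite_subset by blast
  have l0: "legal_seq V E C []" by (simp add: legal_seq_def)
  obtain t0 where "legal_seq V E C t0" "dominating_seq V E C t0"
    using legal_extend[OF G assms(3) l0] by blast
  then have neS: "S \<noteq> {}" unfolding S_def by blast
  have gd: "grundy_dom V E C = Max S" by (simp add: grundy_dom_def S_def)
  have "Max S \<in> S" using finS neS by (rule Max_in)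
  then have "\<exists>s. Max S = length s \<and> legal_seq V E C s \<and> dominating_seq V E C s"
    unfolding S_def by (simp only: mem_Collect_eq)
  then obtain s where s: "legal_seq V E C s" "length s = grundy_dom V E C"
    using gd by auto
  have ub: "length t \<le> grundy_dom V E C" if tl: "legal_seq V E C t" for t
  proof -
    obtain t' where t': "legal_seq V E C t'" "dominating_seq V E C t'" "length t \<le> length t'"
      using legal_extend[OF G assms(3) tl] by blast
    then have "length t' \<in> S" unfolding S_def by blast
    then have "length t' \<le> Max S" using finS by simp
    then show ?thesis using t' gd by simp
  qed
  show ?thesis
  proof (intro conjI allI impI)
    show "\<exists>x y. F1_feasible V E C m x y \<and> F1_objective V m y = int (grundy_dom V E C)"
      using lower[OF G s(1)] s(2) assms(5) by simp
  next
    fix x y assume "F1_feasible V E C m x y"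
    from upper[OF G this] obtain t where "legal_seq V E C t" "int (length t) = F1_objective V m y"
      by blast
    then show "F1_objective V m y \<le> int (grundy_dom V E C)" using ub by force
  qed
qed

end
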